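(* Let $\alpha_1,\ldots,\alpha_n$ and $\beta_1,\ldots,\beta_n$ be real numbers with $1\ge\alpha_1\ge\cdots\ge\alpha_n\ge 0$ and $1\ge\beta_1\ge\cdots\ge\beta_n\ge 0$. Define probability distributions on $\{0,1\}^n$ by \[ P(x)=\frac{1}{2^n}\prod_{j=1}^n\big(1+(-1)^{x_j}\alpha_j\big),\qquad Q(y)=\frac{1}{2^n}\prod_{j=1}^n\big(1+(-1)^{y_j}\beta_j\big). \] If $\prod_{j=1}^k\alpha_j\le\prod_{j=1}^k\beta_j$ for all $k=1,\ldots,n$, with equality for $k=n$, then $P\prec Q$.
   Context: For probability vectors $P,Q$ with $N$ entries, $P\prec Q$ (majorization) means: sorting entries in non-increasing order $p^\downarrow_1\ge\cdots\ge p^\downarrow_N$, $q^\downarrow_1\ge\cdots\ge q^\downarrow_N$, one has $\sum_{i=1}^k p^\downarrow_i\le\sum_{i=1}^k q^\downarrow_i$ for all $k=1,\ldots,N$, with equality for $k=N$. *)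

theory Defs
  imports Complex_Main
begin

definition majorized :: "real list \<Rightarrow> real list \<Rightarrow> bool" where
  "majorized p q \<longleftrightarrow> length p = length q \<and>
     (\<forall>k \<in> {1..length p}. sum_list (take k (rev (sort p))) \<le> sum_list (take k (rev (sort q)))) \<and>
     sum_list (rev (sort p)) = sum_list (rev (sort q))"

text \<open>Points of {0,1}^n are boolean lists of length n (True stands for 1);
  \<open>List.n_lists n [False, True]\<close> enumerates all of them, each exactly once.\<close>
definition cube_points :: "nat \<Rightarrow> bool list list" where
  "cube_points n = List.n_lists n [False, True]"

text \<open>The product distribution with biases a 0, ..., a (n-1) (paper's alpha_1..alpha_n).\<close>
definition prod_dist :: "nat \<Rightarrow> (nat \<Rightarrow> real) \<Rightarrow> bool list \<Rightarrow> real" where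
  "prod_dist n a x = (1 / 2 ^ n) * (\<Prod>j<n. 1 + (if x ! j then -1 else 1) * a j)"

definition majorized_dist :: "nat \<Rightarrow> (bool list \<Rightarrow> real) \<Rightarrow> (bool list \<Rightarrow> real) \<Rightarrow> bool" where
  "majorized_dist n P Q \<longleftrightarrow> majorized (map P (cube_points n)) (map Q (cube_points n))"

end

theory Submission
  imports Defs "HOL-Library.Multiset" "HOL-Library.FuncSet"
begin


definition maj :: "'a set \<Rightarrow> ('a \<Rightarrow> real) \<Rightarrow> 'b set \<Rightarrow> ('b \<Rightarrow> real) \<Rightarrow> bool" where
  "maj A P B Q \<longleftrightarrow> finite A \<and> finite B \<and> card A = card B \<and> sum P A = sum Q B \<and>
     (\<forall>S\<subseteq>A. \<exists>T\<subseteq>B. card T = card S \<and> sum P S \<le> sum Q T)"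

lemma maj_trans:
  assumes "maj A P B Q" "maj B Q C R" shows "maj A P C R"
proof -
  have ex1: "\<forall>S\<subseteq>A. \<exists>T\<subseteq>B. card T = card S \<and> sum P S \<le> sum Q T"
    using assms(1) unfolding maj_def by simp
  have ex2: "\<forall>S\<subseteq>B. \<exists>T\<subseteq>C. card T = card S \<and> sum Q S \<le> sum R T"
    using assms(2) unfolding maj_def by simp
  have "\<exists>U\<subseteq>C. card U = card S \<and> sum P S \<le> sum R U" if "S \<subseteq> A" for S
  proof -
    from ex1[rule_format, OF that] obtain T where T: "T \<subseteq> B" "card T = card S" "sum P S \<le> sum Q T"
      by auto
    from ex2[rule_format, OF T(1)] obtain U where U: "U \<subseteq> C" "card U = card T" "sum Q T \<le> sum R U"
      by auto
    show ?thesis using T U by (intro exI[of _ U]) auto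
  qed
  moreover have "finite A" "finite C" "card A = card C" "sum P A = sum R C"
    using assms unfolding maj_def by simp_all
  ultimately show ?thesis unfolding maj_def by simp
qed

lemma maj_refl: assumes "finite A" shows "maj A P A P"
proof -
  have "\<exists>T\<subseteq>A. card T = card S \<and> sum P S \<le> sum P T" if "S \<subseteq> A" for S
    using that by (intro exI[of _ S]) simp
  then show ?thesis using assms unfolding maj_def by simp
qed

lemma maj_bij_left:
  assumes "bij_betw h A' A" "maj A P B Q" shows "maj A' (P \<circ> h) B Q"
proof -
  have fin: "finite A'" using assms(2) bij_betw_finite[OF assms(1)] unfolding maj_def by simp
  have c: "card A' = card A" using assms(1) bij_betw_same_card by blast
  have s: "sum (P \<circ> h) A' = sum P A" using sum.reindex_bij_betw[OF assms(1), of P] by (simp add: comp_def)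
  have "\<exists>T\<subseteq>B. card T = card S \<and> sum (P \<circ> h) S \<le> sum Q T" if "S \<subseteq> A'" for S
  proof -
    have inj: "inj_on h S" using assms(1) that unfolding bij_betw_def using inj_on_subset[of h A' S] by simp
    have hS: "h ` S \<subseteq> A" using assms(1) that unfolding bij_betw_def by (metis image_mono)
    have ex: "\<forall>S\<subseteq>A. \<exists>T\<subseteq>B. card T = card S \<and> sum P S \<le> sum Q T"
      using assms(2) unfolding maj_def by simp
    from ex[rule_format, OF hS] obtain T where T: "T \<subseteq> B" "card T = card (h ` S)" "sum P (h ` S) \<le> sum Q T"
      by auto
    have "card (h ` S) = card S" using card_image[OF inj] .
    moreover have "sum P (h ` S) = sum (P \<circ> h) S" using sum.reindex[OF inj, of P] by simp
    ultimately show ?thesis using T by (intro exI[of _ T]) simp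
  qed
  moreover have "finite B" "card A = card B" "sum P A = sum Q B" using assms(2) by (simp_all add: maj_def)
  ultimately show ?thesis using fin c s unfolding maj_def apply (intro conjI) apply (simp_all only: comp_def) by blast
qed

lemma maj_bij_right:
  assumes "bij_betw h B' B" "maj A P B Q" shows "maj A P B' (Q \<circ> h)"
proof -
  have fin: "finite B'" using assms(2) bij_betw_finite[OF assms(1)] unfolding maj_def by simp
  have c: "card B' = card B" using assms(1) bij_betw_same_card by blast
  have s: "sum (Q \<circ> h) B' = sum Q B" using sum.reindex_bij_betw[OF assms(1), of Q] by (simp add: comp_def)
  have "\<exists>T\<subseteq>B'. card T = card S \<and> sum P S \<le> sum (Q \<circ> h) T" if "S \<subseteq> A" for S
  proof -
    have ex: "\<forall>S\<subseteq>A. \<exists>T\<subseteq>B. card T = card S \<and> sum P S \<le> sum Q T"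
      using assms(2) unfolding maj_def by simp
    from ex[rule_format, OF that] obtain T where T: "T \<subseteq> B" "card T = card S" "sum P S \<le> sum Q T"
      by auto
    define T' where "T' = {y\<in>B'. h y \<in> T}"
    have "T' \<subseteq> B'" unfolding T'_def by blast
    then have inj: "inj_on h T'" using assms(1) unfolding bij_betw_def using inj_on_subset[of h B' T'] by simp
    have im: "h ` T' = T"
    proof
      show "h ` T' \<subseteq> T" unfolding T'_def by blast
      show "T \<subseteq> h ` T'"
      proof
        fix y assume "y \<in> T"
        then have "y \<in> h ` B'" using T(1) assms(1) unfolding bij_betw_def by blast
        then obtain x where "x \<in> B'" "y = h x" by blast
        then show "y \<in> h ` T'" using \<open>y \<in> T\<close> unfolding T'_def by blast
      qed
    qed
    have "card T' = card T" using card_image[OF inj] im by simp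
    moreover have "sum (Q \<circ> h) T' = sum Q T" using sum.reindex[OF inj, of Q] im by simp
    moreover have "T' \<subseteq> B'" unfolding T'_def by blast
    ultimately show ?thesis using T by (intro exI[of _ T']) simp
  qed
  moreover have "finite A" "card A = card B" "sum P A = sum Q B" using assms(2) by (simp_all add: maj_def)
  ultimately show ?thesis using fin c s unfolding maj_def apply (intro conjI) apply (simp_all only: comp_def) by blast
qed

lemma maj_tensor_left:
  assumes m: "maj A P B Q" and C: "finite C" and R: "\<forall>c\<in>C. 0 \<le> R c"
  shows "maj (C \<times> A) (\<lambda>(c,a). R c * P a) (C \<times> B) (\<lambda>(c,b). R c * Q b)"
proof -
  have fA: "finite A" and fB: "finite B" and cAB: "card A = card B" and sAB: "sum P A = sum Q B"
    and ex: "\<forall>S\<subseteq>A. \<exists>T\<subseteq>B. card T = card S \<and> sum P S \<le> sum Q T"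
    using m unfolding maj_def by auto
  have "\<exists>T\<subseteq>C \<times> B. card T = card S \<and> sum (\<lambda>(c,a). R c * P a) S \<le> sum (\<lambda>(c,b). R c * Q b) T"
    if S: "S \<subseteq> C \<times> A" for S
  proof -
    define Sc where "Sc c = {a. (c,a) \<in> S}" for c
    have Sc_sub: "Sc c \<subseteq> A" if "c \<in> C" for c using S unfolding Sc_def by auto
    have "\<forall>c\<in>C. \<exists>T. T \<subseteq> B \<and> card T = card (Sc c) \<and> sum P (Sc c) \<le> sum Q T"
      using ex Sc_sub by blast
    then obtain t where t: "\<And>c. c \<in> C \<Longrightarrow> t c \<subseteq> B \<and> card (t c) = card (Sc c) \<and> sum P (Sc c) \<le> sum Q (t c)"
      by metis
    have Seq: "S = Sigma C Sc" using S unfolding Sc_def by auto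
    have finSc: "\<forall>c\<in>C. finite (Sc c)" using Sc_sub fA finite_subset by blast
    have fint: "\<forall>c\<in>C. finite (t c)" using t fB finite_subset by blast
    have "card (Sigma C t) = (\<Sum>c\<in>C. card (t c))" using card_SigmaI C fint by blast
    also have "\<dots> = (\<Sum>c\<in>C. card (Sc c))" using t by (auto intro: sum.cong)
    also have "\<dots> = card S" using card_SigmaI C finSc Seq by metis
    finally have c1: "card (Sigma C t) = card S" .
    have "sum (\<lambda>(c,a). R c * P a) S = (\<Sum>c\<in>C. \<Sum>a\<in>Sc c. R c * P a)"
      unfolding Seq using sum.Sigma[OF C finSc, of "\<lambda>c a. R c * P a"] by (simp add: split_def)
    also have "\<dots> = (\<Sum>c\<in>C. R c * sum P (Sc c))" by (simp add: sum_distrib_left)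
    also have "\<dots> \<le> (\<Sum>c\<in>C. R c * sum Q (t c))"
      using t R by (intro sum_mono mult_left_mono) auto
    also have "\<dots> = (\<Sum>c\<in>C. \<Sum>b\<in>t c. R c * Q b)" by (simp add: sum_distrib_left)
    also have "\<dots> = sum (\<lambda>(c,b). R c * Q b) (Sigma C t)"
      using sum.Sigma[OF C fint, of "\<lambda>c b. R c * Q b"] by (simp add: split_def)
    finally show ?thesis using c1 t by (intro exI[of _ "Sigma C t"]) auto
  qed
  moreover have "sum (\<lambda>(c,a). R c * P a) (C \<times> A) = sum (\<lambda>(c,b). R c * Q b) (C \<times> B)"
    by (simp add: sum.cartesian_product' sum_distrib_left[symmetric] sAB)
  ultimately show ?thesis using fA fB C cAB unfolding maj_def by (auto simp: card_cartesian_product)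
qed

lemma maj_tensor_right:
  assumes m: "maj A P B Q" and C: "finite C" and R: "\<forall>c\<in>C. 0 \<le> R c"
  shows "maj (A \<times> C) (\<lambda>(a,c). P a * R c) (B \<times> C) (\<lambda>(b,c). Q b * R c)"
proof -
  have m2: "maj (C \<times> A) (\<lambda>(c,a). R c * P a) (C \<times> B) (\<lambda>(c,b). R c * Q b)"
    using maj_tensor_left[OF assms] .
  have b1: "bij_betw prod.swap (A \<times> C) (C \<times> A)" by (simp add: bij_betw_def inj_on_def product_swap)
  have b2: "bij_betw prod.swap (B \<times> C) (C \<times> B)" by (simp add: bij_betw_def inj_on_def product_swap)
  have "maj (A \<times> C) ((\<lambda>(c,a). R c * P a) \<circ> prod.swap) (B \<times> C) ((\<lambda>(c,b). R c * Q b) \<circ> prod.swap)"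
    using maj_bij_right[OF b2 maj_bij_left[OF b1 m2]] .
  moreover have "((\<lambda>(c,a). R c * P a) \<circ> prod.swap) = (\<lambda>(a,c). P a * R c)" by (auto simp: fun_eq_iff)
  moreover have "((\<lambda>(c,b). R c * Q b) \<circ> prod.swap) = (\<lambda>(b,c). Q b * R c)" by (auto simp: fun_eq_iff)
  ultimately show ?thesis by simp
qed



definition bt :: "real \<Rightarrow> bool \<Rightarrow> real" where
  "bt a u = (1 + (if u then -1 else 1) * a) / 2"

lemma bt_nonneg: "0 \<le> a \<Longrightarrow> a \<le> 1 \<Longrightarrow> 0 \<le> bt a u"
  unfolding bt_def by auto

lemma sum_bool: "sum f (S::bool set) = (if False \<in> S then f False else 0) + (if True \<in> S then f True else 0)"
proof -
  have "sum f S = (\<Sum>p\<in>UNIV. if p \<in> S then f p else 0)"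
    by (simp add: sum.If_cases)
  also have "\<dots> = (if False \<in> S then f False else 0) + (if True \<in> S then f True else 0)"
    by (simp add: UNIV_bool)
  finally show ?thesis .
qed

lemma bt_sum_UNIV: "sum (bt a) UNIV = 1"
  by (simp add: UNIV_bool bt_def field_simps)

lemma one_bit:
  assumes "0 \<le> a" "a \<le> b" "b \<le> 1"
  shows "maj (UNIV::bool set) (bt a) UNIV (bt b)"
proof -
  have ex: "\<exists>T\<subseteq>UNIV. card T = card S \<and> sum (bt a) S \<le> sum (bt b) T" for S :: "bool set"
  proof -
    define T where "T = set (take (card S) [False, True])"
    have cS: "card S = (if False \<in> S then 1 else 0) + (if True \<in> S then 1 else 0)"
      using sum_bool[of "\<lambda>_. 1::nat" S] by simp
    have sT: "sum (bt b) T = sum_list (map (bt b) (take (card S) [False, True]))"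
      unfolding T_def by (rule sum_list_distinct_conv_sum_set[symmetric]) (simp add: distinct_take)
    have cT: "card T = card S" unfolding T_def using cS
      by (auto simp: distinct_card distinct_take)
    have "sum (bt a) S \<le> sum (bt b) T"
      unfolding sT sum_bool[of _ S] using cS assms by (cases "False \<in> S"; cases "True \<in> S") (auto simp: bt_def field_simps)
    then show ?thesis using cT by auto
  qed
  show ?thesis unfolding maj_def using ex by (simp add: bt_sum_UNIV)
qed

abbreviation Cb :: "nat set \<Rightarrow> (nat \<Rightarrow> bool) set" where
  "Cb I \<equiv> PiE I (\<lambda>_. UNIV)"

definition Pd :: "nat set \<Rightarrow> (nat \<Rightarrow> real) \<Rightarrow> (nat \<Rightarrow> bool) \<Rightarrow> real" where
  "Pd I f x = (\<Prod>i\<in>I. bt (f i) (x i))"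

lemma Pd_cong: "(\<And>i. i \<in> I \<Longrightarrow> f i = g i) \<Longrightarrow> Pd I f = Pd I g"
  unfolding Pd_def by (intro ext prod.cong) auto

lemma Pd_nonneg: "(\<And>i. i \<in> I \<Longrightarrow> 0 \<le> f i \<and> f i \<le> 1) \<Longrightarrow> 0 \<le> Pd I f x"
  unfolding Pd_def by (intro prod_nonneg) (auto intro: bt_nonneg)

lemma Pd_restrict: "Pd J f (restrict x J) = Pd J f x"
  unfolding Pd_def by (intro prod.cong) auto

lemma D1_bij:
  assumes "i \<in> I"
  shows "bij_betw (\<lambda>x. (x i, restrict x (I - {i}))) (Cb I) (UNIV \<times> Cb (I - {i}))"
proof -
  have inj: "inj_on (\<lambda>x. (x i, restrict x (I - {i}))) (Cb I)"
  proof (rule inj_onI)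
    fix x y assume x: "x \<in> Cb I" and y: "y \<in> Cb I"
      and e: "(x i, restrict x (I - {i})) = (y i, restrict y (I - {i}))"
    show "x = y"
    proof
      fix k
      show "x k = y k"
      proof (cases "k \<in> I")
        case True
        show ?thesis
        proof (cases "k = i")
          case True then show ?thesis using e by simp
        next
          case False
          have "restrict x (I - {i}) k = restrict y (I - {i}) k" using e by simp
          then show ?thesis using False \<open>k \<in> I\<close> by simp
        qed
      next
        case False
        then show ?thesis using PiE_arb[OF x False] PiE_arb[OF y False] by simp
      qed
    qed
  qed
  have "(\<lambda>x. (x i, restrict x (I - {i}))) ` Cb I = UNIV \<times> Cb (I - {i})"
  proof
    show "(\<lambda>x. (x i, restrict x (I - {i}))) ` Cb I \<subseteq> UNIV \<times> Cb (I - {i})" by auto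
    show "UNIV \<times> Cb (I - {i}) \<subseteq> (\<lambda>x. (x i, restrict x (I - {i}))) ` Cb I"
    proof
      fix p :: "bool \<times> (nat \<Rightarrow> bool)" assume p: "p \<in> UNIV \<times> Cb (I - {i})"
      obtain u y where uy: "p = (u, y)" by (cases p)
      with p have y: "y \<in> Cb (I - {i})" by simp
      define x where "x = (\<lambda>k. if k = i then u else y k)"
      have yext: "\<forall>k. k \<notin> I - {i} \<longrightarrow> y k = undefined" using y by (simp add: PiE_iff extensional_def)
      have "x \<in> Cb I" unfolding PiE_iff extensional_def x_def using yext assms by auto
      moreover have "restrict x (I - {i}) = y" unfolding x_def using yext by (auto simp: fun_eq_iff)
      ultimately show "p \<in> (\<lambda>x. (x i, restrict x (I - {i}))) ` Cb I"
        unfolding uy by (intro image_eqI[of _ _ x]) (auto simp: x_def)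
    qed
  qed
  then show ?thesis using inj unfolding bij_betw_def by simp
qed

lemma D1_eq:
  assumes "i \<in> I" "finite I"
  shows "Pd I f x = bt (f i) (x i) * Pd (I - {i}) f (restrict x (I - {i}))"
  unfolding Pd_restrict unfolding Pd_def using assms by (simp add: prod.remove)

lemma D2_bij:
  assumes "j \<in> I" "m \<in> I" "j \<noteq> m"
  shows "bij_betw (\<lambda>x. ((x j, x m), restrict x (I - {j, m}))) (Cb I) ((UNIV \<times> UNIV) \<times> Cb (I - {j, m}))"
proof -
  have inj: "inj_on (\<lambda>x. ((x j, x m), restrict x (I - {j, m}))) (Cb I)"
  proof (rule inj_onI)
    fix x y assume x: "x \<in> Cb I" and y: "y \<in> Cb I"
      and e: "((x j, x m), restrict x (I - {j, m})) = ((y j, y m), restrict y (I - {j, m}))"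
    show "x = y"
    proof
      fix k
      show "x k = y k"
      proof (cases "k \<in> I")
        case True
        show ?thesis
        proof (cases "k = j \<or> k = m")
          case True then show ?thesis using e by auto
        next
          case False
          have "restrict x (I - {j, m}) k = restrict y (I - {j, m}) k" using e by simp
          then show ?thesis using False \<open>k \<in> I\<close> by simp
        qed
      next
        case False
        then show ?thesis using PiE_arb[OF x False] PiE_arb[OF y False] by simp
      qed
    qed
  qed
  have "(\<lambda>x. ((x j, x m), restrict x (I - {j, m}))) ` Cb I = (UNIV \<times> UNIV) \<times> Cb (I - {j, m})"
  proof
    show "(\<lambda>x. ((x j, x m), restrict x (I - {j, m}))) ` Cb I \<subseteq> (UNIV \<times> UNIV) \<times> Cb (I - {j, m})" by auto
    show "(UNIV \<times> UNIV) \<times> Cb (I - {j, m}) \<subseteq> (\<lambda>x. ((x j, x m), restrict x (I - {j, m}))) ` Cb I"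
    proof
      fix p :: "(bool \<times> bool) \<times> (nat \<Rightarrow> bool)" assume p: "p \<in> (UNIV \<times> UNIV) \<times> Cb (I - {j, m})"
      obtain u v y where uy: "p = ((u, v), y)" by (cases p) auto
      with p have y: "y \<in> Cb (I - {j, m})" by simp
      define x where "x = (\<lambda>k. if k = j then u else if k = m then v else y k)"
      have yext: "\<forall>k. k \<notin> I - {j, m} \<longrightarrow> y k = undefined" using y by (simp add: PiE_iff extensional_def)
      have "x \<in> Cb I" unfolding PiE_iff extensional_def x_def using yext assms by auto
      moreover have "restrict x (I - {j, m}) = y" unfolding x_def using yext by (auto simp: fun_eq_iff)
      ultimately show "p \<in> (\<lambda>x. ((x j, x m), restrict x (I - {j, m}))) ` Cb I"
        unfolding uy using assms(3) by (intro image_eqI[of _ _ x]) (auto simp: x_def)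
    qed
  qed
  then show ?thesis using inj unfolding bij_betw_def by simp
qed

lemma D2_eq:
  assumes "j \<in> I" "m \<in> I" "j \<noteq> m" "finite I"
  shows "Pd I f x = (bt (f j) (x j) * bt (f m) (x m)) * Pd (I - {j, m}) f (restrict x (I - {j, m}))"
proof -
  have "Pd I f x = bt (f j) (x j) * Pd (I - {j}) f x" unfolding Pd_def using assms by (simp add: prod.remove)
  also have "Pd (I - {j}) f x = bt (f m) (x m) * Pd (I - {j} - {m}) f x"
  proof -
    have "m \<in> I - {j}" "finite (I - {j})" using assms by auto
    then show ?thesis unfolding Pd_def by (rule prod.remove[rotated])
  qed
  finally show ?thesis unfolding Pd_restrict by (simp add: insert_commute Diff_insert2[symmetric] ac_simps)
qed



lemma UNIV_bb: "(UNIV::(bool\<times>bool) set) = {(False,False),(False,True),(True,False),(True,True)}"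
  by (auto simp: UNIV_bool)

lemma sum_bb: "sum f (S::(bool\<times>bool) set) =
   (if (False,False) \<in> S then f (False,False) else 0) + (if (False,True) \<in> S then f (False,True) else 0) +
   (if (True,False) \<in> S then f (True,False) else 0) + (if (True,True) \<in> S then f (True,True) else 0)"
proof -
  have "sum f S = (\<Sum>p\<in>UNIV. if p \<in> S then f p else 0)"
    by (simp add: sum.If_cases)
  also have "\<dots> = (if (False,False) \<in> S then f (False,False) else 0) + (if (False,True) \<in> S then f (False,True) else 0) +
   (if (True,False) \<in> S then f (True,False) else 0) + (if (True,True) \<in> S then f (True,True) else 0)"
    unfolding UNIV_bb by (simp add: ac_simps)
  finally show ?thesis .
qed

lemma two_bit:
  assumes "0 \<le> a" "a \<le> 1" "0 \<le> d" "d \<le> 1" "0 \<le> b" "b \<le> 1" "0 \<le> e" "e \<le> 1"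
    "a \<le> b" "d \<le> b" "e \<le> b" "a * d = b * e"
  shows "maj (UNIV::(bool\<times>bool) set) (\<lambda>(u,v). bt a u * bt d v) UNIV (\<lambda>(u,v). bt b u * bt e v)"
proof -
  define q where "q = a * d"
  have qe: "b * e = q" using assms q_def by simp
  have F1: "a + d \<le> b + e"
  proof (cases "b = 0")
    case True then show ?thesis using assms by simp
  next
    case False
    have "0 \<le> (b - a) * (b - d)" using assms by (intro mult_nonneg_nonneg) auto
    then have "b * (a + d) \<le> b * (b + e)" using assms by (simp add: algebra_simps)
    then show ?thesis using False assms by (simp add: mult_le_cancel_left)
  qed
  have q1: "q \<le> a" unfolding q_def using mult_left_mono[of d 1 a] assms by simp
  have q2: "q \<le> d" unfolding q_def using mult_right_mono[of a 1 d] assms by simp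
  have q3: "q \<le> e" unfolding qe[symmetric] using mult_right_mono[of b 1 e] assms by simp
  have q4: "q \<le> b" unfolding qe[symmetric] using mult_left_mono[of e 1 b] assms by simp
  have q0: "0 \<le> q" unfolding q_def using assms by simp
  let ?P = "\<lambda>(u,v). bt a u * bt d v" and ?Q = "\<lambda>(u,v). bt b u * bt e v"
  have P: "bt a False * bt d False = (1+a+d+q)/4" "bt a False * bt d True = (1+a-d-q)/4"
    "bt a True * bt d False = (1-a+d-q)/4" "bt a True * bt d True = (1-a-d+q)/4"
    unfolding q_def bt_def by (simp_all add: field_simps)
  have Q: "bt b False * bt e False = (1+b+e+q)/4" "bt b False * bt e True = (1+b-e-q)/4"
    "bt b True * bt e False = (1-b+e-q)/4" "bt b True * bt e True = (1-b-e+q)/4"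
    unfolding qe[symmetric] bt_def by (simp_all add: field_simps)
  define L where "L = [(False,False),(False,True),(True,False),(True,True)]"
  have ex: "\<exists>T\<subseteq>UNIV. card T = card S \<and> sum ?P S \<le> sum ?Q T" for S :: "(bool\<times>bool) set"
  proof -
    define T where "T = set (take (card S) L)"
    have cS: "card S = (if (False,False) \<in> S then 1 else 0) + (if (False,True) \<in> S then 1 else 0) +
   (if (True,False) \<in> S then 1 else 0) + (if (True,True) \<in> S then 1 else 0)"
      using sum_bb[of "\<lambda>_. 1::nat" S] by simp
    have sT: "sum ?Q T = sum_list (map ?Q (take (card S) L))"
      unfolding T_def by (rule sum_list_distinct_conv_sum_set[symmetric]) (simp add: distinct_take L_def)
    have cT: "card T = card S" unfolding T_def using cS
      by (simp add: distinct_card distinct_take L_def)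
    have "sum ?P S \<le> sum_list (map ?Q (take (card S) L))"
      unfolding sum_bb[of _ S] cS L_def using F1 q0 q1 q2 q3 q4 assms
      apply (cases "(False,False) \<in> S"; cases "(False,True) \<in> S"; cases "(True,False) \<in> S"; cases "(True,True) \<in> S")
      by (simp_all add: P Q add_divide_distrib diff_divide_distrib)
    then show ?thesis using cT sT by auto
  qed
  have s1: "sum ?P UNIV = 1" unfolding sum_bb[of _ UNIV] by (simp add: P field_simps)
  have s2: "sum ?Q UNIV = 1" unfolding sum_bb[of _ UNIV] by (simp add: Q field_simps)
  show ?thesis unfolding maj_def using ex s1 s2 by simp
qed



lemma finite_Cb: "finite I \<Longrightarrow> finite (Cb I)"
  by (simp add: finite_PiE)

lemma step_common:
  assumes "i \<in> I" "j \<in> I'" "finite I" "finite I'" "f i = g j" "0 \<le> f i" "f i \<le> 1"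
    and m: "maj (Cb (I - {i})) (Pd (I - {i}) f) (Cb (I' - {j})) (Pd (I' - {j}) g)"
  shows "maj (Cb I) (Pd I f) (Cb I') (Pd I' g)"
proof -
  have R: "\<forall>c\<in>UNIV. 0 \<le> bt (f i) c" using assms by (simp add: bt_nonneg)
  have m2: "maj (UNIV \<times> Cb (I - {i})) (\<lambda>(c,a). bt (f i) c * Pd (I - {i}) f a)
               (UNIV \<times> Cb (I' - {j})) (\<lambda>(c,b). bt (f i) c * Pd (I' - {j}) g b)"
    using maj_tensor_left[OF m _ R] by simp
  have m3: "maj (Cb I) ((\<lambda>(c,a). bt (f i) c * Pd (I - {i}) f a) \<circ> (\<lambda>x. (x i, restrict x (I - {i}))))
               (Cb I') ((\<lambda>(c,b). bt (f i) c * Pd (I' - {j}) g b) \<circ> (\<lambda>x. (x j, restrict x (I' - {j}))))"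
    using maj_bij_right[OF D1_bij[OF assms(2)] maj_bij_left[OF D1_bij[OF assms(1)] m2]] .
  have e1: "((\<lambda>(c,a). bt (f i) c * Pd (I - {i}) f a) \<circ> (\<lambda>x. (x i, restrict x (I - {i})))) = Pd I f"
    using D1_eq[OF assms(1,3)] by (simp add: fun_eq_iff)
  have e2: "((\<lambda>(c,b). bt (f i) c * Pd (I' - {j}) g b) \<circ> (\<lambda>x. (x j, restrict x (I' - {j})))) = Pd I' g"
    using D1_eq[OF assms(2,4)] assms(5) by (simp add: fun_eq_iff)
  show ?thesis using m3 unfolding e1 e2 .
qed

lemma step_bit:
  assumes "i \<in> I" "finite I" "0 \<le> f i" "f i \<le> b" "b \<le> 1" "\<forall>k\<in>I. 0 \<le> f k \<and> f k \<le> 1"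
  shows "maj (Cb I) (Pd I f) (Cb I) (Pd I (f(i := b)))"
proof -
  have R: "\<forall>c\<in>Cb (I - {i}). 0 \<le> Pd (I - {i}) f c" using assms(6) by (intro ballI Pd_nonneg) auto
  have m2: "maj (UNIV \<times> Cb (I - {i})) (\<lambda>(a,c). bt (f i) a * Pd (I - {i}) f c)
               (UNIV \<times> Cb (I - {i})) (\<lambda>(a,c). bt b a * Pd (I - {i}) f c)"
    using maj_tensor_right[OF one_bit[OF assms(3,4,5)] _ R] assms(2) by (simp add: finite_Cb)
  have m3: "maj (Cb I) ((\<lambda>(a,c). bt (f i) a * Pd (I - {i}) f c) \<circ> (\<lambda>x. (x i, restrict x (I - {i}))))
               (Cb I) ((\<lambda>(a,c). bt b a * Pd (I - {i}) f c) \<circ> (\<lambda>x. (x i, restrict x (I - {i}))))"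
    using maj_bij_right[OF D1_bij[OF assms(1)] maj_bij_left[OF D1_bij[OF assms(1)] m2]] .
  have e1: "((\<lambda>(a,c). bt (f i) a * Pd (I - {i}) f c) \<circ> (\<lambda>x. (x i, restrict x (I - {i})))) = Pd I f"
    using D1_eq[OF assms(1,2)] by (simp add: fun_eq_iff)
  have pc: "Pd (I - {i}) (f(i := b)) = Pd (I - {i}) f" by (rule Pd_cong) auto
  have e2: "((\<lambda>(a,c). bt b a * Pd (I - {i}) f c) \<circ> (\<lambda>x. (x i, restrict x (I - {i})))) = Pd I (f(i := b))"
    using D1_eq[OF assms(1,2), of "f(i := b)"] pc by (simp add: fun_eq_iff)
  show ?thesis using m3 unfolding e1 e2 .
qed

lemma step_two:
  assumes "j \<in> I" "m \<in> I" "j \<noteq> m" "finite I" "\<forall>k\<in>I. 0 \<le> f k \<and> f k \<le> 1"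
    "0 \<le> a" "a \<le> 1" "0 \<le> d" "d \<le> 1"
    "a \<le> f j" "d \<le> f j" "f m \<le> f j" "a * d = f j * f m"
  shows "maj (Cb I) (Pd I (f(j := a, m := d))) (Cb I) (Pd I f)"
proof -
  let ?K = "I - {j, m}"
  let ?g = "f(j := a, m := d)"
  have R: "\<forall>c\<in>Cb ?K. 0 \<le> Pd ?K f c" using assms(5) by (intro ballI Pd_nonneg) auto
  have tb: "maj (UNIV::(bool\<times>bool) set) (\<lambda>(u,v). bt a u * bt d v) UNIV (\<lambda>(u,v). bt (f j) u * bt (f m) v)"
    using assms by (intro two_bit) auto
  have m2: "maj (UNIV \<times> Cb ?K) (\<lambda>(p,c). (\<lambda>(u,v). bt a u * bt d v) p * Pd ?K f c)
               (UNIV \<times> Cb ?K) (\<lambda>(p,c). (\<lambda>(u,v). bt (f j) u * bt (f m) v) p * Pd ?K f c)"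
    using maj_tensor_right[OF tb _ R] assms(4) by (simp add: finite_Cb)
  have bij: "bij_betw (\<lambda>x. ((x j, x m), restrict x ?K)) (Cb I) (UNIV \<times> Cb ?K)"
    using D2_bij[OF assms(1-3)] by (simp add: UNIV_Times_UNIV)
  have m3: "maj (Cb I) ((\<lambda>(p,c). (\<lambda>(u,v). bt a u * bt d v) p * Pd ?K f c) \<circ> (\<lambda>x. ((x j, x m), restrict x ?K)))
               (Cb I) ((\<lambda>(p,c). (\<lambda>(u,v). bt (f j) u * bt (f m) v) p * Pd ?K f c) \<circ> (\<lambda>x. ((x j, x m), restrict x ?K)))"
    using maj_bij_right[OF bij maj_bij_left[OF bij m2]] .
  have pc: "Pd ?K ?g = Pd ?K f" by (rule Pd_cong) auto
  have e1: "((\<lambda>(p,c). (\<lambda>(u,v). bt a u * bt d v) p * Pd ?K f c) \<circ> (\<lambda>x. ((x j, x m), restrict x ?K))) = Pd I ?g"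
    using D2_eq[OF assms(1-4), of ?g] pc assms(3) by (simp add: fun_eq_iff)
  have e2: "((\<lambda>(p,c). (\<lambda>(u,v). bt (f j) u * bt (f m) v) p * Pd ?K f c) \<circ> (\<lambda>x. ((x j, x m), restrict x ?K))) = Pd I f"
    using D2_eq[OF assms(1-4), of f] by (simp add: fun_eq_iff)
  show ?thesis using m3 unfolding e1 e2 .
qed



lemma prod_le_pow:
  fixes f :: "'a \<Rightarrow> real"
  assumes "\<forall>k\<in>S. 0 \<le> f k \<and> f k \<le> a" shows "prod f S \<le> a ^ card S"
proof -
  have "prod f S \<le> prod (\<lambda>_. a) S" using assms by (intro prod_mono) auto
  then show ?thesis by simp
qed

lemma pow_le_prod:
  fixes f :: "'a \<Rightarrow> real"
  assumes "0 \<le> a" "\<forall>k\<in>T. a \<le> f k" shows "a ^ card T \<le> prod f T"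
proof -
  have "prod (\<lambda>_. a) T \<le> prod f T" using assms by (intro prod_mono) auto
  then show ?thesis by simp
qed

lemma prod_nonneg_on: "\<forall>k\<in>T. 0 \<le> f k \<Longrightarrow> (0::real) \<le> prod f T"
  by (intro prod_nonneg) auto

lemma main:
  fixes \<alpha> \<beta> :: "nat \<Rightarrow> real"
  assumes "finite I" "finite I'" "card I = card I'"
    "\<forall>k\<in>I. 0 \<le> \<alpha> k \<and> \<alpha> k \<le> 1" "\<forall>k\<in>I'. 0 \<le> \<beta> k \<and> \<beta> k \<le> 1"
    "\<forall>S\<subseteq>I. \<exists>T\<subseteq>I'. card T = card S \<and> prod \<alpha> S \<le> prod \<beta> T"
  shows "maj (Cb I) (Pd I \<alpha>) (Cb I') (Pd I' \<beta>)"
  using assms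
proof (induction "card I" arbitrary: I I' \<alpha> \<beta>)
  case 0
  then have "I = {}" "I' = {}" by auto
  moreover have "Pd {} \<alpha> = (\<lambda>_. 1)" "Pd {} \<beta> = (\<lambda>_. 1)" by (simp_all add: Pd_def fun_eq_iff)
  ultimately show ?case using maj_refl[of "Cb {}" "\<lambda>_. 1"] by (simp add: finite_Cb)
next
  case (Suc n)
  have finI: "finite I" and finI': "finite I'" and cardeq: "card I = card I'"
    and bA: "\<forall>k\<in>I. 0 \<le> \<alpha> k \<and> \<alpha> k \<le> 1" and bB: "\<forall>k\<in>I'. 0 \<le> \<beta> k \<and> \<beta> k \<le> 1"
    and cond: "\<forall>S\<subseteq>I. \<exists>T\<subseteq>I'. card T = card S \<and> prod \<alpha> S \<le> prod \<beta> T"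
    using Suc.prems by auto
  have Ine: "I \<noteq> {}" using Suc.hyps(2) by auto
  have I'ne: "I' \<noteq> {}" using Suc.hyps(2) cardeq by auto
  have "Max (\<alpha> ` I) \<in> \<alpha> ` I" using finI Ine by simp
  then obtain i where i: "i \<in> I" "\<alpha> i = Max (\<alpha> ` I)" by auto
  then have imax: "\<forall>k\<in>I. \<alpha> k \<le> \<alpha> i" using finI by simp
  have "Max (\<beta> ` I') \<in> \<beta> ` I'" using finI' I'ne by simp
  then obtain j where j: "j \<in> I'" "\<beta> j = Max (\<beta> ` I')" by auto
  then have jmax: "\<forall>k\<in>I'. \<beta> k \<le> \<beta> j" using finI' by simp
  define a where "a = \<alpha> i"
  define b where "b = \<beta> j"
  have a0: "0 \<le> a" "a \<le> 1" using bA i unfolding a_def by auto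
  have b0: "0 \<le> b" "b \<le> 1" using bB j unfolding b_def by auto
  have ab: "a \<le> b"
  proof -
    have "{i} \<subseteq> I" using i by simp
    from cond[rule_format, OF this] obtain T where T: "T \<subseteq> I'" "card T = 1" "prod \<alpha> {i} \<le> prod \<beta> T"
      by auto
    from T(2) obtain t where t: "T = {t}" by (auto simp: card_Suc_eq)
    have "a \<le> \<beta> t" using T(3) unfolding t a_def by simp
    also have "\<beta> t \<le> b" using jmax T(1) t unfolding b_def by auto
    finally show ?thesis .
  qed
  define J where "J = I - {i}"
  define J' where "J' = I' - {j}"
  have cJ: "n = card J" using Suc.hyps(2) i finI unfolding J_def by simp
  have cJ': "card J' = card J" using cardeq i j finI finI' unfolding J_def J'_def by simp
  have finJ: "finite J" "finite J'" using finI finI' unfolding J_def J'_def by auto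
  have IH: "maj (Cb J) (Pd J f) (Cb J') (Pd J' g)"
    if "\<forall>k\<in>J. 0 \<le> f k \<and> f k \<le> 1" "\<forall>k\<in>J'. 0 \<le> g k \<and> g k \<le> 1"
       "\<forall>S\<subseteq>J. \<exists>T\<subseteq>J'. card T = card S \<and> prod f S \<le> prod g T" for f g
    using Suc.hyps(1)[OF cJ finJ(1) finJ(2) cJ'[symmetric] that] .
  have aJ: "\<forall>k\<in>J. 0 \<le> \<alpha> k \<and> \<alpha> k \<le> a" using bA imax unfolding J_def a_def by auto
  show ?case
  proof (cases "\<exists>t\<in>J'. \<beta> t \<le> a")
    case False
    then have gt: "\<forall>t\<in>J'. a < \<beta> t" by auto
    have c1: "\<forall>S\<subseteq>J. \<exists>T\<subseteq>J'. card T = card S \<and> prod \<alpha> S \<le> prod \<beta> T"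
    proof (intro allI impI)
      fix S assume S: "S \<subseteq> J"
      have "card S \<le> card J'" using S finJ cJ' card_mono by metis
      then obtain T where T: "T \<subseteq> J'" "card T = card S" by (metis obtain_subset_with_card_n)
      have "prod \<alpha> S \<le> a ^ card S" using aJ S by (intro prod_le_pow) auto
      also have "\<dots> \<le> prod \<beta> T" unfolding T(2)[symmetric] using gt T(1) a0
        by (intro pow_le_prod) (auto simp: subset_iff less_imp_le)
      finally show "\<exists>T\<subseteq>J'. card T = card S \<and> prod \<alpha> S \<le> prod \<beta> T" using T by blast
    qed
    have m1: "maj (Cb J) (Pd J \<alpha>) (Cb J') (Pd J' \<beta>)"
      using IH[OF _ _ c1] bA bB unfolding J_def J'_def by auto
    have pc: "Pd J (\<alpha>(i := b)) = Pd J \<alpha>" unfolding J_def by (rule Pd_cong) auto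
    have m2: "maj (Cb I) (Pd I (\<alpha>(i := b))) (Cb I') (Pd I' \<beta>)"
      using step_common[of i I j I' "\<alpha>(i := b)" \<beta>] i(1) j(1) finI finI' b0 m1 pc
      unfolding J_def J'_def b_def by simp
    have m0: "maj (Cb I) (Pd I \<alpha>) (Cb I) (Pd I (\<alpha>(i := b)))"
      using step_bit[of i I \<alpha> b] i(1) finI a0 ab b0 bA unfolding a_def by simp
    show ?thesis using maj_trans[OF m0 m2] .
  next
    case True
    define M where "M = {t\<in>J'. \<beta> t \<le> a}"
    have finM: "finite M" "M \<noteq> {}" using True finJ unfolding M_def by auto
    have "Max (\<beta> ` M) \<in> \<beta> ` M" using finM by simp
    then obtain m where m: "m \<in> M" "\<beta> m = Max (\<beta> ` M)" by auto
    define e where "e = \<beta> m"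
    have hm: "\<forall>t\<in>J'. \<beta> t \<le> a \<longrightarrow> \<beta> t \<le> e" using m finM unfolding e_def M_def by auto
    have mJ': "m \<in> J'" and ea: "e \<le> a" using m unfolding M_def e_def by auto
    have mI': "m \<in> I'" and mj: "m \<noteq> j" using mJ' unfolding J'_def by auto
    have e0: "0 \<le> e" "e \<le> 1" using bB mI' unfolding e_def by auto
    define d where "d = (if a = 0 then b else b * e / a)"
    have ad: "a * d = b * e"
    proof (cases "a = 0")
      case True then have "e = 0" using ea e0 by simp
      then show ?thesis using True unfolding d_def by simp
    next
      case False then show ?thesis unfolding d_def by simp
    qed
    have d0: "0 \<le> d" unfolding d_def using a0 b0 e0 by simp
    have db: "d \<le> b"
    proof (cases "a = 0")
      case True then show ?thesis unfolding d_def by simp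
    next
      case False
      then have "0 < a" using a0 by simp
      have "b * e \<le> b * a" using ea b0 by (simp add: mult_left_mono)
      then show ?thesis using \<open>0 < a\<close> False unfolding d_def by (simp add: divide_le_eq)
    qed
    define \<gamma> where "\<gamma> = \<beta>(j := a, m := d)"
    have gj: "\<gamma> j = a" and gm: "\<gamma> m = d" and gb: "\<And>t. t \<noteq> j \<Longrightarrow> t \<noteq> m \<Longrightarrow> \<gamma> t = \<beta> t"
      unfolding \<gamma>_def using mj by auto
    have bG: "\<forall>k\<in>I'. 0 \<le> \<gamma> k \<and> \<gamma> k \<le> 1" using bB a0 d0 db b0 unfolding \<gamma>_def by auto
    have s2: "maj (Cb I') (Pd I' \<gamma>) (Cb I') (Pd I' \<beta>)"
      unfolding \<gamma>_def
      using step_two[of j I' m \<beta> a d] j(1) mI' mj finI' bB a0 d0 db b0 ab ad jmax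
      unfolding b_def e_def by simp
    have c1: "\<forall>S\<subseteq>J. \<exists>T\<subseteq>J'. card T = card S \<and> prod \<alpha> S \<le> prod \<gamma> T"
    proof (intro allI impI)
      fix S assume S: "S \<subseteq> J"
      have finS: "finite S" using S finJ finite_subset by blast
      have iS: "i \<notin> S" using S unfolding J_def by auto
      have cSJ': "card S \<le> card J'" using S finJ cJ' card_mono by metis
      have gJ': "\<forall>t\<in>J'. 0 \<le> \<gamma> t" using bG unfolding J'_def by auto
      have bI': "\<forall>t\<in>I'. 0 \<le> \<beta> t" using bB by auto
      have L0: "\<exists>T\<subseteq>J'. card T = card S \<and> prod \<alpha> S \<le> prod \<gamma> T"
        if T: "T \<subseteq> J'" "card T = card S" "\<forall>t\<in>T. a \<le> \<gamma> t" for T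
      proof -
        have "prod \<alpha> S \<le> a ^ card S" using aJ S by (intro prod_le_pow) auto
        also have "\<dots> \<le> prod \<gamma> T" unfolding T(2)[symmetric] using T(3) a0 by (intro pow_le_prod) auto
        finally show ?thesis using T by blast
      qed
      show "\<exists>T\<subseteq>J'. card T = card S \<and> prod \<alpha> S \<le> prod \<gamma> T"
      proof (cases "a = 0")
        case True
        from cSJ' obtain T where T: "T \<subseteq> J'" "card T = card S" by (metis obtain_subset_with_card_n)
        have "\<forall>t\<in>T. a \<le> \<gamma> t" using T(1) gJ' True by auto
        then show ?thesis using L0 T by blast
      next
        case False
        then have apos: "0 < a" using a0 by simp
        have "insert i S \<subseteq> I" using S i(1) unfolding J_def by auto
        from cond[rule_format, OF this] obtain T0 where T0: "T0 \<subseteq> I'" "card T0 = card (insert i S)"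
          "prod \<alpha> (insert i S) \<le> prod \<beta> T0" by auto
        have cT0: "card T0 = Suc (card S)" using T0(2) finS iS by simp
        have finT0: "finite T0" using T0(1) finI' finite_subset by blast
        have key: "a * prod \<alpha> S \<le> prod \<beta> T0" using T0(3) finS iS unfolding a_def by simp
        have pgb: "prod \<gamma> R = prod \<beta> R" if "j \<notin> R" "m \<notin> R" for R
          using that by (intro prod.cong refl gb) auto
        have claim: "\<exists>T\<subseteq>J'. card T = card S \<and> (prod \<beta> T0 \<le> a * prod \<gamma> T \<or> (\<forall>t\<in>T. a \<le> \<gamma> t))"
        proof (cases "j \<in> T0")
          case jT: True
          have pj: "prod \<beta> T0 = b * prod \<beta> (T0 - {j})" using prod.remove[OF finT0 jT, of \<beta>] unfolding b_def .
          have cTj: "card (T0 - {j}) = card S" using cT0 jT finT0 by simp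
          have Tj: "T0 - {j} \<subseteq> J'" using T0(1) unfolding J'_def by auto
          show ?thesis
          proof (cases "m \<in> T0")
            case mT: True
            have mTj: "m \<in> T0 - {j}" using mT mj by simp
            have f2: "finite (T0 - {j})" using finT0 by simp
            have p1: "prod \<beta> (T0 - {j}) = e * prod \<beta> (T0 - {j} - {m})"
              using prod.remove[OF f2 mTj, of \<beta>] unfolding e_def .
            have p2: "prod \<gamma> (T0 - {j}) = d * prod \<gamma> (T0 - {j} - {m})"
              using prod.remove[OF f2 mTj, of \<gamma>] unfolding gm .
            have p3: "prod \<gamma> (T0 - {j} - {m}) = prod \<beta> (T0 - {j} - {m})" by (rule pgb) auto
            have "prod \<beta> T0 = a * prod \<gamma> (T0 - {j})"
              unfolding pj p1 p2 p3 using ad by (simp add: ac_simps)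
            then show ?thesis using cTj Tj by (intro exI[of _ "T0 - {j}"]) simp
          next
            case mT: False
            show ?thesis
            proof (cases "\<exists>t\<in>T0 - {j}. \<beta> t \<le> a")
              case True
              then obtain t where t: "t \<in> T0 - {j}" "\<beta> t \<le> a" by blast
              have tJ': "t \<in> J'" using t T0(1) unfolding J'_def by auto
              have te: "\<beta> t \<le> e" using hm tJ' t(2) by blast
              define R where "R = T0 - {j} - {t}"
              have f2: "finite (T0 - {j})" using finT0 by simp
              have finR: "finite R" using finT0 unfolding R_def by simp
              have p1: "prod \<beta> (T0 - {j}) = \<beta> t * prod \<beta> R"
                using prod.remove[OF f2 t(1), of \<beta>] unfolding R_def .
              have mR: "m \<notin> R" "j \<notin> R" using mT unfolding R_def by auto
              have cR: "card R = card S - 1" using cTj t(1) f2 unfolding R_def by simp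
              have cS1: "1 \<le> card S" using cTj t(1) f2 by (metis One_nat_def Suc_leI card_gt_0_iff empty_iff)
              have cT: "card (insert m R) = card S" using cR cS1 finR mR by simp
              have TJ: "insert m R \<subseteq> J'" using mJ' T0(1) unfolding R_def J'_def by auto
              have p2: "prod \<gamma> (insert m R) = d * prod \<beta> R"
                using finR mR gm pgb[OF mR(2) mR(1)] by simp
              have PR: "0 \<le> prod \<beta> R" using bI' T0(1) unfolding R_def by (intro prod_nonneg_on) auto
              have "prod \<beta> T0 = b * (\<beta> t * prod \<beta> R)" unfolding pj p1 ..
              also have "\<dots> \<le> b * (e * prod \<beta> R)"
                using te PR b0 by (intro mult_left_mono mult_right_mono) auto
              also have "\<dots> = a * prod \<gamma> (insert m R)" unfolding p2 using ad by (simp add: ac_simps)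
              finally show ?thesis using cT TJ by (intro exI[of _ "insert m R"]) simp
            next
              case False
              have "\<forall>t\<in>T0 - {j}. a \<le> \<gamma> t" using False mT gb by force
              then show ?thesis using cTj Tj by (intro exI[of _ "T0 - {j}"]) simp
            qed
          qed
        next
          case jT: False
          have T0J: "T0 \<subseteq> J'" using T0(1) jT unfolding J'_def by auto
          show ?thesis
          proof (cases "\<exists>t\<in>T0. \<beta> t \<le> a")
            case True
            define t where "t = (if m \<in> T0 then m else (SOME t. t \<in> T0 \<and> \<beta> t \<le> a))"
            have t: "t \<in> T0" "\<beta> t \<le> a" "m \<notin> T0 - {t}"
              using True someI_ex[OF True[unfolded Bex_def]] ea unfolding t_def e_def by (auto split: if_splits)
            have cT: "card (T0 - {t}) = card S" using cT0 t(1) finT0 by simp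
            have TJ: "T0 - {t} \<subseteq> J'" using T0J by auto
            have p1: "prod \<beta> T0 = \<beta> t * prod \<beta> (T0 - {t})" using prod.remove[OF finT0 t(1), of \<beta>] .
            have p2: "prod \<gamma> (T0 - {t}) = prod \<beta> (T0 - {t})" using jT t(3) by (intro pgb) auto
            have PR: "0 \<le> prod \<beta> (T0 - {t})" using bI' T0(1) by (intro prod_nonneg_on) auto
            have "prod \<beta> T0 \<le> a * prod \<gamma> (T0 - {t})" unfolding p1 p2
              using t(2) PR by (intro mult_right_mono) auto
            then show ?thesis using cT TJ by (intro exI[of _ "T0 - {t}"]) simp
          next
            case False
            have "T0 \<noteq> {}" using cT0 by auto
            then obtain t where t: "t \<in> T0" by auto
            have cT: "card (T0 - {t}) = card S" using cT0 t(1) finT0 by simp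
            have TJ: "T0 - {t} \<subseteq> J'" using T0J by auto
            have mT: "m \<notin> T0" using False ea unfolding e_def by auto
            have "\<forall>s\<in>T0 - {t}. a \<le> \<gamma> s" using False mT jT gb by force
            then show ?thesis using cT TJ by (intro exI[of _ "T0 - {t}"]) simp
          qed
        qed
        then obtain T where T: "T \<subseteq> J'" "card T = card S"
          "prod \<beta> T0 \<le> a * prod \<gamma> T \<or> (\<forall>t\<in>T. a \<le> \<gamma> t)" by blast
        show ?thesis
        proof (cases "prod \<beta> T0 \<le> a * prod \<gamma> T")
          case True
          then have "a * prod \<alpha> S \<le> a * prod \<gamma> T" using key by linarith
          then have "prod \<alpha> S \<le> prod \<gamma> T" using apos by simp
          then show ?thesis using T by blast
        next
          case False
          then show ?thesis using T L0 by blast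
        qed
      qed
    qed
    have m1: "maj (Cb J) (Pd J \<alpha>) (Cb J') (Pd J' \<gamma>)"
      using IH[OF _ _ c1] bA bG unfolding J_def J'_def by auto
    have m2: "maj (Cb I) (Pd I \<alpha>) (Cb I') (Pd I' \<gamma>)"
      using step_common[of i I j I' \<alpha> \<gamma>] i(1) j(1) finI finI' a0 m1 gj
      unfolding J_def J'_def a_def by simp
    show ?thesis using maj_trans[OF m2 s2] .
  qed
qed



lemma sub_add_notin: "M \<subseteq># add_mset y N \<Longrightarrow> y \<notin># M \<Longrightarrow> M \<subseteq># N"
  by (simp add: inter_add_left1 subset_mset.inf.absorb_iff2)

lemma topk:
  fixes ys :: "real list"
  shows "sorted_wrt (\<ge>) ys \<Longrightarrow> M \<subseteq># mset ys \<Longrightarrow> sum_mset M \<le> sum_list (take (size M) ys)"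
proof (induction ys arbitrary: M)
  case Nil
  then show ?case by simp
next
  case (Cons y ys)
  have yge: "\<forall>z\<in>set ys. z \<le> y" and sys: "sorted_wrt (\<ge>) ys" using Cons.prems(1) by auto
  show ?case
  proof (cases "y \<in># M")
    case True
    define M' where "M' = M - {#y#}"
    have M: "M = add_mset y M'" using True unfolding M'_def by simp
    have sub: "M' \<subseteq># mset ys" using Cons.prems(2) unfolding M by simp
    have "sum_mset M' \<le> sum_list (take (size M') ys)" using Cons.IH[OF sys sub] .
    then show ?thesis unfolding M by simp
  next
    case False
    have sub: "M \<subseteq># mset ys" using Cons.prems(2) False sub_add_notin by simp
    show ?thesis
    proof (cases "M = {#}")
      case True then show ?thesis by simp
    next
      case False
      then obtain z where z: "z \<in># M" by blast
      define M' where "M' = M - {#z#}"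
      have M: "M = add_mset z M'" using z unfolding M'_def by simp
      have sub': "M' \<subseteq># mset ys" using sub unfolding M'_def by (metis diff_subset_eq_self subset_mset.trans)
      have "z \<in># mset ys" using sub z by (rule mset_subset_eqD)
      then have zy: "z \<le> y" using yge by simp
      have "sum_mset M' \<le> sum_list (take (size M') ys)" using Cons.IH[OF sys sub'] .
      then show ?thesis unfolding M using zy by simp
    qed
  qed
qed

lemma sub_image_mset:
  "M \<subseteq># image_mset f N \<Longrightarrow> \<exists>N'. N' \<subseteq># N \<and> M = image_mset f N'"
proof (induction N arbitrary: M)
  case empty
  then show ?case by simp
next
  case (add x N)
  show ?case
  proof (cases "f x \<in># M")
    case True
    define M' where "M' = M - {#f x#}"
    have M: "M = add_mset (f x) M'" using True unfolding M'_def by simp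
    have "M' \<subseteq># image_mset f N" using add.prems unfolding M by simp
    then obtain N' where N': "N' \<subseteq># N" "M' = image_mset f N'" using add.IH by blast
    show ?thesis using N' M by (intro exI[of _ "add_mset x N'"]) simp
  next
    case False
    have "M \<subseteq># image_mset f N" using add.prems False sub_add_notin by simp
    then obtain N' where N': "N' \<subseteq># N" "M = image_mset f N'" using add.IH by blast
    show ?thesis using N' by (intro exI[of _ N']) (simp add: subset_mset.order_trans)
  qed
qed

lemma take_sub: "mset (take k ys) \<subseteq># mset ys"
proof -
  have "mset ys = mset (take k ys) + mset (drop k ys)" by (metis append_take_drop_id mset_append)
  then show ?thesis by (metis mset_subset_eq_add_left)
qed
lemma dist_sub: assumes "N \<subseteq># mset xs" "distinct xs" shows "N = mset_set (set_mset N)"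
proof (rule multiset_eqI)
  fix x
  have c1: "count N x \<le> count (mset xs) x" using assms(1) by (rule mset_subset_eq_count)
  have c2: "count (mset xs) x \<le> 1" using assms(2) distinct_count_atmost_1 by (metis order_refl zero_le_one)
  show "count N x = count (mset_set (set_mset N)) x"
  proof (cases "x \<in># N")
    case True
    then have h1: "1 \<le> count N x" by simp
    have h2: "count (mset_set (set_mset N)) x = 1" using True by simp
    show ?thesis using c1 c2 h1 h2 by linarith
  next
    case False
    then show ?thesis by (simp add: count_eq_zero_iff)
  qed
qed

lemma maj_to_list:
  assumes d: "distinct xs" and m: "maj (set xs) P (set xs) Q"
  shows "majorized (map P xs) (map Q xs)"
proof -
  have ex: "\<forall>S\<subseteq>set xs. \<exists>T\<subseteq>set xs. card T = card S \<and> sum P S \<le> sum Q T"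
    using m unfolding maj_def by simp
  have sPQ: "sum P (set xs) = sum Q (set xs)" using m unfolding maj_def by simp
  have sl: "sum_list (rev (sort (map f xs))) = sum f (set xs)" for f :: "_ \<Rightarrow> real"
  proof -
    have "sum_list (rev (sort (map f xs))) = sum_mset (mset (rev (sort (map f xs))))"
      by (simp only: sum_mset_sum_list)
    also have "\<dots> = sum_mset (mset (map f xs))" by simp
    also have "\<dots> = sum_list (map f xs)" by (simp only: sum_mset_sum_list)
    also have "\<dots> = sum f (set xs)" using d by (simp add: sum_list_distinct_conv_sum_set)
    finally show ?thesis .
  qed
  have sortQ: "sorted_wrt (\<ge>) (rev (sort (map Q xs)))"
    by (simp add: sorted_wrt_rev)
  have k: "sum_list (take k (rev (sort (map P xs)))) \<le> sum_list (take k (rev (sort (map Q xs))))"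
    if "k \<le> length xs" for k
  proof -
    define L where "L = take k (rev (sort (map P xs)))"
    have "mset L \<subseteq># mset (rev (sort (map P xs)))" unfolding L_def by (rule take_sub)
    also have "\<dots> = image_mset P (mset xs)" by simp
    finally obtain N' where N': "N' \<subseteq># mset xs" "mset L = image_mset P N'"
      using sub_image_mset by blast
    define S where "S = set_mset N'"
    have NS: "N' = mset_set S" unfolding S_def using dist_sub[OF N'(1) d] .
    have Ssub: "S \<subseteq> set xs" unfolding S_def using N'(1)
      by (metis mset_subset_eqD set_mset_mset subsetI)
    have finS: "finite S" unfolding S_def by simp
    have lenL: "length L = k" unfolding L_def using that by simp
    have cS: "card S = k"
    proof -
      have "card S = size N'" unfolding NS using finS by simp
      also have "\<dots> = size (mset L)" using N'(2) by simp
      finally show ?thesis using lenL by simp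
    qed
    have sS: "sum_list L = sum P S"
    proof -
      have "sum_list L = sum_mset (mset L)" by (simp only: sum_mset_sum_list)
      also have "\<dots> = sum_mset (image_mset P (mset_set S))" using N'(2) NS by simp
      also have "\<dots> = sum P S" by (simp only: sum_unfold_sum_mset)
      finally show ?thesis .
    qed
    from ex[rule_format, OF Ssub] obtain T where T: "T \<subseteq> set xs" "card T = card S" "sum P S \<le> sum Q T"
      by auto
    have finT: "finite T" using T(1) finite_subset by blast
    have sub: "image_mset Q (mset_set T) \<subseteq># mset (rev (sort (map Q xs)))"
    proof -
      have "mset_set T \<subseteq># mset_set (set xs)" using T(1) by (simp add: subset_imp_msubset_mset_set)
      then have "image_mset Q (mset_set T) \<subseteq># image_mset Q (mset_set (set xs))" by (rule image_mset_subseteq_mono)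
      also have "\<dots> = mset (rev (sort (map Q xs)))" using d by (simp add: mset_set_set)
      finally show ?thesis .
    qed
    have sz: "size (image_mset Q (mset_set T)) = k" using T(2) cS finT by simp
    have "sum Q T = sum_mset (image_mset Q (mset_set T))" by (simp only: sum_unfold_sum_mset)
    also have "\<dots> \<le> sum_list (take k (rev (sort (map Q xs))))"
      using topk[OF sortQ sub] unfolding sz .
    finally show ?thesis using sS T(3) unfolding L_def by linarith
  qed
  show ?thesis unfolding majorized_def using k sl[of P] sl[of Q] sPQ by simp
qed



lemma sorted_prod:
  fixes f :: "nat \<Rightarrow> real"
  assumes mono: "\<forall>i j. i \<le> j \<and> j < n \<longrightarrow> f j \<le> f i" and nn: "\<forall>j<n. 0 \<le> f j"
  shows "S \<subseteq> {..<n} \<Longrightarrow> prod f S \<le> prod f {..<card S}"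
proof (induction "card S" arbitrary: S)
  case 0
  have "finite S" using 0(2) finite_subset by blast
  then have "S = {}" using 0(1) by simp
  then show ?case by simp
next
  case (Suc k)
  have finS: "finite S" using Suc.prems finite_subset by blast
  have Sne: "S \<noteq> {}" using Suc.hyps(2) by auto
  define s where "s = Max S"
  have sS: "s \<in> S" unfolding s_def using finS Sne by simp
  have sn: "s < n" using sS Suc.prems by auto
  have Sle: "S \<subseteq> {..s}" unfolding s_def using finS by auto
  have "Suc k \<le> Suc s" using card_mono[OF _ Sle] Suc.hyps(2) by simp
  then have ks: "k \<le> s" by simp
  have cS': "k = card (S - {s})" using Suc.hyps(2) sS finS by simp
  have IH: "prod f (S - {s}) \<le> prod f {..<k}" using Suc.hyps(1)[OF cS'] Suc.prems cS' by auto
  have P0: "0 \<le> prod f (S - {s})" using nn Suc.prems by (intro prod_nonneg) auto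
  have "prod f S = f s * prod f (S - {s})" using prod.remove[OF finS sS] .
  also have "\<dots> \<le> f k * prod f {..<k}"
    using mono ks sn nn IH P0 by (intro mult_mono) auto
  also have "\<dots> = prod f {..<card S}" unfolding Suc.hyps(2)[symmetric] by (simp add: mult.commute)
  finally show ?case .
qed

lemma cube_bij:
  "bij_betw (\<lambda>xs. (\<lambda>j. if j < n then xs ! j else undefined)) (set (cube_points n)) (Cb {..<n})"
proof -
  have set_c: "set (cube_points n) = {xs. length xs = n}"
    unfolding cube_points_def set_n_lists by auto
  let ?g = "\<lambda>xs::bool list. (\<lambda>j. if j < n then xs ! j else undefined)"
  have inj: "inj_on ?g {xs. length xs = n}"
  proof (rule inj_onI)
    fix xs ys assume xs: "xs \<in> {xs. length xs = n}" and ys: "ys \<in> {xs. length xs = n}" and e: "?g xs = ?g ys"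
    show "xs = ys"
    proof (rule nth_equalityI)
      show "length xs = length ys" using xs ys by simp
      fix j assume "j < length xs"
      then have "j < n" using xs by simp
      then show "xs ! j = ys ! j" using fun_cong[OF e, of j] by simp
    qed
  qed
  have im: "?g ` {xs. length xs = n} = Cb {..<n}"
  proof
    show "?g ` {xs. length xs = n} \<subseteq> Cb {..<n}" by (auto simp: PiE_iff extensional_def)
    show "Cb {..<n} \<subseteq> ?g ` {xs. length xs = n}"
    proof
      fix f assume f: "f \<in> Cb {..<n}"
      have "?g (map f [0..<n]) = f"
      proof
        fix j show "?g (map f [0..<n]) j = f j"
          using PiE_arb[OF f, of j] by auto
      qed
      then have fe: "f = ?g (map f [0..<n])" by simp
      show "f \<in> ?g ` {xs. length xs = n}"
      proof (rule image_eqI)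
        show "f = ?g (map f [0..<n])" by (rule fe)
        show "map f [0..<n] \<in> {xs. length xs = n}" by simp
      qed
    qed
  qed
  show ?thesis unfolding set_c bij_betw_def using inj im by simp
qed

lemma prod_dist_Pd:
  "prod_dist n f = Pd {..<n} f \<circ> (\<lambda>xs. (\<lambda>j. if j < n then xs ! j else undefined))"
proof
  fix xs :: "bool list"
  have "Pd {..<n} f (\<lambda>j. if j < n then xs ! j else undefined) = (\<Prod>j<n. (1 + (if xs ! j then -1 else 1) * f j) / 2)"
    unfolding Pd_def bt_def by (intro prod.cong) auto
  also have "\<dots> = (\<Prod>j<n. 1 + (if xs ! j then -1 else 1) * f j) / 2 ^ n"
    by (simp add: prod_dividef)
  finally show "prod_dist n f xs = (Pd {..<n} f \<circ> (\<lambda>xs. (\<lambda>j. if j < n then xs ! j else undefined))) xs"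
    unfolding prod_dist_def by simp
qed

theorem lemma4:
  fixes n :: nat and \<alpha> \<beta> :: "nat \<Rightarrow> real"
  assumes "\<forall>j<n. 0 \<le> \<alpha> j \<and> \<alpha> j \<le> 1"
      and "\<forall>j<n. 0 \<le> \<beta> j \<and> \<beta> j \<le> 1"
      and "\<forall>i j. i \<le> j \<and> j < n \<longrightarrow> \<alpha> j \<le> \<alpha> i"
      and "\<forall>i j. i \<le> j \<and> j < n \<longrightarrow> \<beta> j \<le> \<beta> i"
      and "\<forall>k \<in> {1..n}. (\<Prod>j<k. \<alpha> j) \<le> (\<Prod>j<k. \<beta> j)"
      and "(\<Prod>j<n. \<alpha> j) = (\<Prod>j<n. \<beta> j)"
  shows "majorized_dist n (prod_dist n \<alpha>) (prod_dist n \<beta>)"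
proof -
  have C: "\<forall>S\<subseteq>{..<n}. \<exists>T\<subseteq>{..<n}. card T = card S \<and> prod \<alpha> S \<le> prod \<beta> T"
  proof (intro allI impI)
    fix S assume S: "S \<subseteq> {..<n}"
    have cS: "card S \<le> n" using card_mono[OF _ S] by simp
    have "prod \<alpha> S \<le> prod \<alpha> {..<card S}" using sorted_prod[of n \<alpha> S] assms(1,3) S by auto
    also have "\<dots> \<le> prod \<beta> {..<card S}"
    proof (cases "card S = 0")
      case True then show ?thesis by simp
    next
      case False then show ?thesis using assms(5) cS by auto
    qed
    finally show "\<exists>T\<subseteq>{..<n}. card T = card S \<and> prod \<alpha> S \<le> prod \<beta> T"
      using cS by (intro exI[of _ "{..<card S}"]) auto
  qed
  have M: "maj (Cb {..<n}) (Pd {..<n} \<alpha>) (Cb {..<n}) (Pd {..<n} \<beta>)"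
    using main[of "{..<n}" "{..<n}" \<alpha> \<beta>] C assms(1,2) by auto
  have M2: "maj (set (cube_points n)) (prod_dist n \<alpha>) (set (cube_points n)) (prod_dist n \<beta>)"
    unfolding prod_dist_Pd using maj_bij_right[OF cube_bij maj_bij_left[OF cube_bij M]] .
  have d: "distinct (cube_points n)" unfolding cube_points_def by (rule distinct_n_lists) simp
  show ?thesis unfolding majorized_dist_def using maj_to_list[OF d M2] .
qed

end
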